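(* For every $r\in\mathbb{N}$ and every integer $n\ge 2$, there is an entrywise nonnegative $3rn\times 3rn$ real matrix $M$ with $\mathrm{rank}^+(M)\ge 4r$ such that for every set of fewer than $n$ rows of $M$, the submatrix of $M$ consisting of those rows has nonnegative rank at most $3r$.
   Context: For an entrywise nonnegative matrix $N$ of dimension $a\times b$, its nonnegative rank $\mathrm{rank}^+(N)$ is the smallest $k$ such that $N=AW$ with $A$ an entrywise nonnegative $a\times k$ matrix and $W$ an entrywise nonnegative $k\times b$ matrix. *)

theory Defs
  imports Main "HOL-Analysis.Analysis"
begin

text \<open>Matrices of varying dimension are represented as functions nat => nat => real;
  the rows are indexed by a finite set I of naturals, columns by {..<b}.
  A submatrix consisting of a set I of rows of M is M restricted to I.\<close>

definition nonneg_fact :: "(nat \<Rightarrow> nat \<Rightarrow> real) \<Rightarrow> nat set \<Rightarrow> nat \<Rightarrow> nat \<Rightarrow> bool" where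
  "nonneg_fact M I b k \<longleftrightarrow>
     (\<exists>A W :: nat \<Rightarrow> nat \<Rightarrow> real.
        (\<forall>i\<in>I. \<forall>l<k. 0 \<le> A i l) \<and> (\<forall>l<k. \<forall>j<b. 0 \<le> W l j) \<and>
        (\<forall>i\<in>I. \<forall>j<b. M i j = (\<Sum>l<k. A i l * W l j)))"

definition nonneg_rank :: "(nat \<Rightarrow> nat \<Rightarrow> real) \<Rightarrow> nat set \<Rightarrow> nat \<Rightarrow> nat" where
  "nonneg_rank M I b = (LEAST k. nonneg_fact M I b k)"

end

theory Submission
  imports Defs
begin


lemma cos_2pi3: "cos (2*pi/3) = -1/2"
proof -
  have "cos (2*pi/3) = cos (pi - pi/3)" by (rule arg_cong[where f=cos]) simp
  also have "\<dots> = -1/2" by (simp only: cos_diff cos_pi sin_pi cos_60)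
  finally show ?thesis .
qed
lemma sin_2pi3: "sin (2*pi/3) = sqrt 3/2"
proof -
  have "sin (2*pi/3) = sin (pi - pi/3)" by (rule arg_cong[where f=sin]) simp
  also have "\<dots> = sqrt 3/2" by (simp only: sin_diff cos_pi sin_pi cos_60 sin_60)
  finally show ?thesis .
qed
lemma cos_4pi3: "cos (4*pi/3) = -1/2"
proof -
  have "cos (4*pi/3) = cos (pi/3 + pi)" by (rule arg_cong[where f=cos]) simp
  also have "\<dots> = -1/2" by (simp only: cos_add cos_pi sin_pi cos_60)
  finally show ?thesis .
qed
lemma sin_4pi3: "sin (4*pi/3) = -sqrt 3/2"
proof -
  have "sin (4*pi/3) = sin (pi/3 + pi)" by (rule arg_cong[where f=sin]) simp
  also have "\<dots> = -sqrt 3/2" by (simp only: sin_add cos_pi sin_pi cos_60 sin_60)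
  finally show ?thesis .
qed

lemma three_sum_id:
  fixes p a b :: real
  shows "(p - 2*cos a)*(1 + cos b) + (p - 2*cos (a - 2*pi/3))*(1 + cos (b - 2*pi/3))
       + (p - 2*cos (a - 4*pi/3))*(1 + cos (b - 4*pi/3)) = 3*(p - cos (a - b))"
proof -
  have s3: "sqrt 3 * sqrt 3 = (3::real)" by simp
  show ?thesis
    unfolding cos_diff cos_2pi3 sin_2pi3 cos_4pi3 sin_4pi3
    by (simp add: field_simps s3)
qed

lemma cos_int_period: "cos ((x::real) + 2 * pi * of_int m) = cos x"
  by (simp add: cos_add)



lemma cos_le_step:
  assumes N: "N \<ge> 2" and nd: "\<not> (int N dvd d)"
  shows "cos (2*pi*real_of_int d / real N) \<le> cos (2*pi / real N)"
proof -
  define d' where "d' = d mod int N"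
  define q where "q = d div int N"
  have dd: "d = q * int N + d'" unfolding d'_def q_def by simp
  have "d' \<noteq> 0" using nd unfolding d'_def by (simp add: dvd_eq_mod_eq_0)
  moreover have "d' \<ge> 0" unfolding d'_def using N by simp
  ultimately have d'pos: "d' \<ge> 1" by linarith
  have d'lt: "d' < int N" unfolding d'_def using N by simp
  have Npos: "real N > 0" using N by simp
  have eq1: "2*pi*real_of_int d / real N = 2*pi*real_of_int d' / real N + 2 * pi * of_int q"
    using Npos by (simp add: dd field_simps)
  have c1: "cos (2*pi*real_of_int d / real N) = cos (2*pi*real_of_int d' / real N)"
    unfolding eq1 by (rule cos_int_period)
  show ?thesis
  proof (cases "2*d' \<le> int N")
    case True
    have a1: "2*pi/real N \<le> 2*pi*real_of_int d'/real N"
      using d'pos Npos by (simp add: divide_right_mono)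
    have "real_of_int (2*d') \<le> real N" using True by linarith
    then have a2: "2*pi*real_of_int d'/real N \<le> pi"
      using Npos by (simp add: field_simps)
    have "cos (2*pi*real_of_int d'/real N) \<le> cos (2*pi/real N)"
      by (rule cos_monotone_0_pi_le) (use a1 a2 Npos in auto)
    then show ?thesis using c1 by simp
  next
    case False
    define e where "e = int N - d'"
    have e1: "e \<ge> 1" using d'lt unfolding e_def by simp
    have e2: "2*e < int N" using False unfolding e_def by simp
    have "2*pi*real_of_int d'/real N = - (2*pi*real_of_int e/real N) + 2 * pi * of_int 1"
      using Npos unfolding e_def by (simp add: field_simps)
    then have c2: "cos (2*pi*real_of_int d'/real N) = cos (2*pi*real_of_int e/real N)"
      by (metis cos_int_period cos_minus)
    have a1: "2*pi/real N \<le> 2*pi*real_of_int e/real N"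
      using e1 Npos by (simp add: divide_right_mono)
    have "real_of_int (2*e) \<le> real N" using e2 by linarith
    then have a2: "2*pi*real_of_int e/real N \<le> pi"
      using Npos by (simp add: field_simps)
    have "cos (2*pi*real_of_int e/real N) \<le> cos (2*pi/real N)"
      by (rule cos_monotone_0_pi_le) (use a1 a2 Npos in auto)
    then show ?thesis using c1 c2 by simp
  qed
qed

lemma nearest_dir:
  assumes N: "N \<ge> 1"
  shows "\<exists>k<N. cos (2*pi*real k/real N) * x1 + sin (2*pi*real k/real N) * x2
              \<ge> sqrt (x1^2 + x2^2) * cos (pi / real N)"
proof (cases "x1 = 0 \<and> x2 = 0")
  case True
  then show ?thesis using N by (intro exI[of _ 0]) auto
next
  case False
  define s where "s = sqrt (x1^2 + x2^2)"
  have "x1^2 + x2^2 > 0" using False by (simp add: sum_power2_gt_zero_iff)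
  then have sp: "s > 0" unfolding s_def by simp
  have ss: "s^2 = x1^2 + x2^2" unfolding s_def by simp
  have "(x1/s)^2 + (x2/s)^2 = (x1^2+x2^2)/s^2" by (simp add: power_divide add_divide_distrib)
  also have "\<dots> = 1" by (subst ss[symmetric]) (use sp in simp)
  finally have "(x1/s)^2 + (x2/s)^2 = 1" .
  then obtain t where t: "0 \<le> t" "t < 2*pi" "x1/s = cos t" "x2/s = sin t"
    by (rule sincos_total_2pi)
  have Npos: "real N > 0" using N by simp
  define m where "m = nat (floor (t * real N / (2*pi) + 1/2))"
  have fl0: "floor (t * real N / (2*pi) + 1/2) \<ge> 0"
    using t Npos by (simp add: zero_le_divide_iff)
  have mreal: "real m = of_int (floor (t * real N / (2*pi) + 1/2))"
    unfolding m_def using fl0 by simp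
  have m1: "real m \<le> t * real N / (2*pi) + 1/2" using mreal by linarith
  have m2: "t * real N / (2*pi) + 1/2 < real m + 1" using mreal by linarith
  have "t * real N / (2*pi) < real N" using t Npos by (simp add: field_simps)
  then have mle: "m \<le> N" using m1 m2 by linarith
  define delta where "delta = t - 2*pi*real m/real N"
  have "\<bar>delta\<bar> \<le> pi / real N"
  proof -
    have "real m - 1/2 \<le> t * real N / (2*pi)" using m1 by simp
    then have i1: "(real m - 1/2) * (2*pi) \<le> t * real N" by (simp add: field_simps)
    have i2: "t * real N \<le> (real m + 1/2) * (2*pi)" using m2 by (simp add: field_simps)
    have "delta * real N = t * real N - 2*pi*real m" unfolding delta_def using Npos by (simp add: field_simps)
    then have "\<bar>delta * real N\<bar> \<le> pi" using i1 i2 by (simp add: abs_le_iff algebra_simps)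
    then show ?thesis using Npos by (simp add: abs_mult field_simps)
  qed
  then have cd: "cos delta \<ge> cos (pi / real N)"
    using cos_monotone_0_pi_le[of "\<bar>delta\<bar>" "pi / real N"] Npos N
    by (simp add: field_simps)
  have val: "cos (2*pi*real m/real N) * x1 + sin (2*pi*real m/real N) * x2 = s * cos delta"
    unfolding delta_def cos_diff using t(3,4) sp by (simp add: field_simps)
  define k where "k = (if m = N then 0 else m)"
  have kN: "k < N" unfolding k_def using mle N by auto
  have "cos (2*pi*real k/real N) = cos (2*pi*real m/real N) \<and> sin (2*pi*real k/real N) = sin (2*pi*real m/real N)"
    unfolding k_def using Npos by auto
  then have "cos (2*pi*real k/real N) * x1 + sin (2*pi*real k/real N) * x2 \<ge> s * cos (pi / real N)"
    using val cd sp by (simp add: mult_left_mono)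
  then show ?thesis using kN unfolding s_def by blast
qed



definition th :: "nat \<Rightarrow> nat \<Rightarrow> real" where "th N k = 2*pi*real k/real N"
definition rh :: "nat \<Rightarrow> real" where "rh N = 2*cos(2*pi/real N)"

lemma cs2: "(g1*x1 + g2*x2::real) \<le> sqrt (g1^2+g2^2) * sqrt (x1^2+x2^2)"
proof -
  have "(g1*x1 + g2*x2)^2 \<le> (g1^2+g2^2) * (x1^2+x2^2)"
    using sum_squares_ge_zero[of "g1*x2 - g2*x1" 0] by (simp add: power2_eq_square algebra_simps)
  then have "\<bar>g1*x1 + g2*x2\<bar> \<le> sqrt ((g1^2+g2^2) * (x1^2+x2^2))"
    using real_le_rsqrt by (metis abs_le_square_iff abs_of_nonneg real_sqrt_abs real_sqrt_le_mono)
  then show ?thesis by (simp add: real_sqrt_mult)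
qed

lemma final_contra:
  fixes x1 x2 z g1 g2 lam :: real
  assumes N: "N \<ge> 6"
    and hk: "\<forall>k<N. cos (th N k) * x1 + sin (th N k) * x2 \<le> rh N * z"
    and hj: "\<forall>j<N. g1 * cos (th N j) + g2 * sin (th N j) + lam \<ge> 0"
    and ht: "g1*x1 + g2*x2 + lam*z = z"
    and l0: "lam \<ge> 0" and l1: "lam \<le> 1/3" and z0: "z \<ge> 0"
    and nz: "\<not> (x1 = 0 \<and> x2 = 0 \<and> z = 0)"
  shows False
proof -
  define c where "c = cos (pi / real N)"
  have Npos: "real N > 0" using N by simp
  have c0: "c > 0" unfolding c_def
    by (rule cos_gt_zero) (use N Npos in \<open>auto simp: field_simps\<close>)
  have "pi / real N > 0" using Npos by simp
  moreover have "pi / real N < pi" using N by (simp add: field_simps)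
  ultimately have c1: "c < 1" unfolding c_def
    using cos_monotone_0_pi[of 0 "pi/real N"] by simp
  have rho: "rh N = 2*(2*c^2 - 1)"
  proof -
    have "2*pi/real N = 2*(pi/real N)" by simp
    then show ?thesis unfolding rh_def c_def by (simp only: cos_double_cos)
  qed
  define X where "X = sqrt (x1^2 + x2^2)"
  define G where "G = sqrt (g1^2 + g2^2)"
  have X0: "X \<ge> 0" "G \<ge> 0" unfolding X_def G_def by auto
  obtain k where k: "k < N" "cos (th N k) * x1 + sin (th N k) * x2 \<ge> X * c"
    using nearest_dir[of N x1 x2] N unfolding th_def X_def c_def by auto
  have hX: "X * c \<le> rh N * z" using hk k by force
  obtain j where j: "j < N" "cos (th N j) * (-g1) + sin (th N j) * (-g2) \<ge> sqrt ((-g1)^2 + (-g2)^2) * c"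
    using nearest_dir[of N "-g1" "-g2"] N unfolding th_def c_def by auto
  have hG: "G * c \<le> lam" using hj j unfolding G_def by (force simp: algebra_simps)
  have "z * (1 - lam) \<le> G * X" using cs2[of g1 x1 g2 x2] ht unfolding G_def X_def by (simp add: algebra_simps)
  then have "z * (1 - lam) * c^2 \<le> (G * X) * c^2" using c0 by (simp add: mult_right_mono)
  also have "\<dots> = (G*c) * (X*c)" by (simp add: power2_eq_square algebra_simps)
  finally have "z * (1 - lam) * c^2 \<le> (G*c) * (X*c)" .
  also have "\<dots> \<le> lam * (rh N * z)"
    by (rule mult_mono[OF hG hX]) (use l0 X0 c0 in auto)
  finally have key: "z * (1 - lam) * c^2 \<le> lam * (rh N * z)" .
  show False
  proof (cases "z = 0")
    case True
    then have "X * c \<le> 0" using hX by simp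
    then have "X = 0" using X0 c0 by (simp add: mult_le_0_iff)
    then have "x1 = 0 \<and> x2 = 0" unfolding X_def by (simp add: sum_power2_eq_zero_iff)
    then show False using nz True by simp
  next
    case False
    then have zp: "z > 0" using z0 by simp
    have "(1 - lam) * c^2 \<le> lam * rh N" using key zp
      by (metis (no_types, lifting) mult.assoc mult.commute mult_le_cancel_left_pos)
    then have k2: "c^2 * (1 - 5*lam) + 2*lam \<le> 0" unfolding rho by (simp add: algebra_simps)
    have "c^2 < 1" using c0 c1 by (simp add: power_less_one_iff)
    moreover have "c^2 > 0" using c0 by simp
    ultimately show False
    proof (cases "1 - 5*lam \<ge> 0")
      case True
      assume c2: "c^2 > 0"
      have "c^2 * (1 - 5*lam) \<ge> 0" using True c2 by simp
      then have "lam = 0" using k2 l0 by linarith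
      then show False using k2 c2 by simp
    next
      case False
      assume c2: "c^2 < 1"
      have "1 * (1 - 5*lam) < c^2 * (1 - 5*lam)"
        by (rule mult_strict_right_mono_neg) (use c2 False in auto)
      then have "(1 - 5*lam) < c^2 * (1 - 5*lam)" by simp
      then show False using k2 l1 by linarith
    qed
  qed
qed



definition fv :: "nat \<Rightarrow> nat \<Rightarrow> real^3" where
  "fv N k = vector [-cos(th N k), -sin(th N k), rh N]"
definition vv :: "nat \<Rightarrow> nat \<Rightarrow> real^3" where
  "vv N j = vector [cos(th N j), sin(th N j), 1]"

lemma inner3: "(x::real^3) \<bullet> y = x$1*y$1 + x$2*y$2 + x$3*y$3"
  by (simp add: inner_vec_def sum_3)

lemma fv_vv: "fv N k \<bullet> vv N j = rh N - cos (th N k - th N j)"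
  unfolding inner3 fv_def vv_def by (simp add: cos_diff)

definition idx :: "nat \<Rightarrow> 3 \<Rightarrow> nat" where
  "idx n i = (if i = 1 then 0 else if i = 2 then n else 2*n)"

lemma th_spec:
  assumes "n > 0"
  shows "th (3*n) 0 = 0" "th (3*n) n = 2*pi/3" "th (3*n) (2*n) = 4*pi/3"
  using assms by (auto simp: th_def field_simps)

lemma rh_pos: assumes "N \<ge> 6" shows "rh N > 0"
proof -
  have "real N > 0" using assms by simp
  have "real N \<ge> 6" using assms by simp
  then have "2*pi/real N \<le> 2*pi/6" by (intro divide_left_mono) auto
  also have "\<dots> < pi/2" by simp
  finally have "2*pi/real N < pi/2" .
  moreover have "-(pi/2) < 2*pi/real N" using \<open>real N > 0\<close>
    by (smt (verit, ccfv_SIG) divide_pos_pos pi_gt_zero)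
  ultimately show ?thesis unfolding rh_def using cos_gt_zero_pi by simp
qed

lemma forall3: "(\<forall>i::3. P i) \<longleftrightarrow> P 1 \<and> P 2 \<and> P 3"
  by (metis exhaust_3)



lemma core:
  fixes a w :: "nat \<Rightarrow> real^3"
  assumes n: "n \<ge> 2" and N: "N = 3*n"
    and ha: "\<forall>k<N. \<forall>l. 0 \<le> a k $ l" and hw: "\<forall>j<N. \<forall>l. 0 \<le> w j $ l"
    and eq: "\<forall>k<N. \<forall>j<N. a k \<bullet> w j = fv N k \<bullet> vv N j"
  shows False
proof -
  have np: "n > 0" using n by simp
  have N6: "N \<ge> 6" using n N by simp
  have idxN: "\<And>i. idx n i < N" unfolding idx_def N using np by auto
  define FK :: "real^3^3" where "FK = (\<chi> i. fv N (idx n i))"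
  define VJ :: "real^3^3" where "VJ = (\<chi> c m. vv N (idx n m) $ c)"
  define AK :: "real^3^3" where "AK = (\<chi> i. a (idx n i))"
  define WJ :: "real^3^3" where "WJ = (\<chi> l m. w (idx n m) $ l)"
  define C where "C = FK ** VJ"
  have AW: "AK ** WJ = C"
    unfolding C_def AK_def WJ_def FK_def VJ_def matrix_matrix_mult_def
    using eq idxN by (simp add: vec_eq_iff inner_vec_def)
  have thv: "th N (idx n 1) = 0" "th N (idx n 2) = 2*pi/3" "th N (idx n 3) = 4*pi/3"
    unfolding idx_def N using th_spec[OF np] by auto
  have detF: "det FK = 3 * (sqrt 3 / 2) * rh N"
    unfolding det_3 FK_def fv_def vec_lambda_beta vector_3 thv cos_2pi3 sin_2pi3 cos_4pi3 sin_4pi3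
    by (simp add: algebra_simps)
  have detV: "det VJ = 3 * (sqrt 3 / 2)"
    unfolding det_3 VJ_def vv_def vec_lambda_beta vector_3 thv cos_2pi3 sin_2pi3 cos_4pi3 sin_4pi3
    by (simp add: algebra_simps)
  have "det C \<noteq> 0" unfolding C_def det_mul detF detV using rh_pos[OF N6] by simp
  then obtain C' where C1: "C ** C' = mat 1" and C2: "C' ** C = mat 1"
    using invertible_det_nz[of C] unfolding invertible_def by blast
  define R where "R = C' ** AK"
  have "R ** WJ = mat 1" unfolding R_def using C2 AW by (simp add: matrix_mul_assoc[symmetric])
  then have WR: "WJ ** R = mat 1" using matrix_left_right_inverse by blast
  define X where "X = VJ ** R"
  have aX: "a k = fv N k v* X" if k: "k < N" for k
  proof -
    have "a k v* WJ = fv N k v* VJ"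
      unfolding WJ_def VJ_def vector_matrix_mult_def
      using eq k idxN by (simp add: vec_eq_iff inner_vec_def mult.commute)
    then have "a k v* WJ v* R = fv N k v* VJ v* R" by simp
    then show ?thesis unfolding X_def vector_matrix_mul_assoc WR by simp
  qed
  define L where "L = WJ ** C'"
  have "AK ** L = mat 1" unfolding L_def using C1 AW by (simp add: matrix_mul_assoc)
  then have LA: "L ** AK = mat 1" using matrix_left_right_inverse by blast
  define Y where "Y = L ** FK"
  have wY: "w j = Y *v vv N j" if j: "j < N" for j
  proof -
    have "AK *v w j = FK *v vv N j"
      unfolding AK_def FK_def matrix_vector_mult_def
      using eq j idxN by (simp add: vec_eq_iff inner_vec_def)
    then have "L *v (AK *v w j) = L *v (FK *v vv N j)" by simp
    then show ?thesis unfolding Y_def matrix_vector_mul_assoc LA by simp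
  qed
  have "R ** L = C'" unfolding R_def L_def
    by (metis AW C2 matrix_mul_assoc matrix_mul_lid)
  have "(C' ** FK) ** VJ = mat 1" using C2 unfolding C_def by (simp add: matrix_mul_assoc)
  then have "VJ ** (C' ** FK) = mat 1" using matrix_left_right_inverse by blast
  then have XY: "X ** Y = mat 1" unfolding X_def Y_def
    by (metis \<open>R ** L = C'\<close> matrix_mul_assoc)
  then have YX: "Y ** X = mat 1" using matrix_left_right_inverse by blast
  have th3: "th N 0 = 0" "th N n = 2*pi/3" "th N (2*n) = 4*pi/3"
    using th_spec[OF np] N by auto
  have i3: "0 < N" "n < N" "2*n < N" using N np by auto
  have mv: "\<And>(A::real^3^3) x i. (A *v x) $ i = A$i$1 * x$1 + A$i$2 * x$2 + A$i$3 * x$3"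
    by (simp add: matrix_vector_mult_def sum_3)
  have vm: "\<And>(A::real^3^3) x j. (x v* A) $ j = x$1 * A$1$j + x$2 * A$2$j + x$3 * A$3$j"
    by (simp add: vector_matrix_mult_def sum_3)
  have mm: "\<And>(A::real^3^3) (B::real^3^3) i j. (A ** B) $ i $ j = A$i$1 * B$1$j + A$i$2 * B$2$j + A$i$3 * B$3$j"
    by (simp add: matrix_matrix_mult_def sum_3)
  define e3 :: "real^3" where "e3 = vector [0,0,1]"
  have vsum: "vv N 0 + vv N n + vv N (2*n) = 3 *\<^sub>R e3"
    unfolding vec_eq_iff forall3 vv_def e3_def th3 cos_2pi3 sin_2pi3 cos_4pi3 sin_4pi3
    by simp
  define \<beta> where "\<beta> = (1/3) *\<^sub>R (w 0 + w n + w (2*n))"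
  have "Y *v (3 *\<^sub>R e3) = w 0 + w n + w (2*n)"
    unfolding vsum[symmetric] matrix_vector_right_distrib using wY i3 by simp
  then have Ye3: "Y *v e3 = \<beta>" unfolding \<beta>_def matrix_vector_mult_scaleR
    by (metis scaleR_scaleR divide_inverse_commute divide_self_if mult.commute
        scaleR_one zero_neq_numeral)
  have Xb: "X *v \<beta> = e3" unfolding Ye3[symmetric] matrix_vector_mul_assoc XY by simp
  have sum1: "X$3$1 * \<beta>$1 + X$3$2 * \<beta>$2 + X$3$3 * \<beta>$3 = 1"
    using arg_cong[OF Xb, of "\<lambda>v. v$3"] by (simp add: mv e3_def)
  have bnn: "\<And>l. \<beta>$l \<ge> 0" unfolding \<beta>_def using hw i3
    by (simp add: add_nonneg_nonneg)
  have ak: "a k $ l = - cos (th N k) * X$1$l - sin (th N k) * X$2$l + rh N * X$3$l"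
    if "k < N" for k l
    unfolding aX[OF that] vm fv_def vector_3 by simp
  have zn: "X$3$l \<ge> 0" for l
  proof -
    have "a 0 $ l + a n $ l + a (2*n) $ l = 3 * rh N * X$3$l"
      unfolding ak[OF i3(1)] ak[OF i3(2)] ak[OF i3(3)] th3 cos_2pi3 sin_2pi3 cos_4pi3 sin_4pi3
      by (simp add: algebra_simps)
    moreover have "a 0 $ l + a n $ l + a (2*n) $ l \<ge> 0" using ha i3 by (simp add: add_nonneg_nonneg)
    ultimately show ?thesis using rh_pos[OF N6] by (simp add: zero_le_mult_iff)
  qed
  obtain l0 where l0: "X$3$l0 * \<beta>$l0 \<le> 1/3"
  proof -
    have "\<exists>l. X$3$l * \<beta>$l \<le> 1/3"
    proof (rule ccontr)
      assume "\<not> ?thesis"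
      then have "\<forall>l. X$3$l * \<beta>$l > 1/3" by (auto simp: not_le)
      then show False using sum1 unfolding forall3 by linarith
    qed
    then show ?thesis using that by blast
  qed
  define z where "z = X$3$l0"
  define lam where "lam = z * \<beta>$l0"
  define g1 where "g1 = z * Y$l0$1"
  define g2 where "g2 = z * Y$l0$2"
  have Y3: "z * Y$l0$3 = lam"
    using arg_cong[OF Ye3, of "\<lambda>v. v$l0"] by (simp add: mv e3_def lam_def)
  have YX1: "Y$l0$1 * X$1$l0 + Y$l0$2 * X$2$l0 + Y$l0$3 * X$3$l0 = 1"
    using arg_cong[OF YX, of "\<lambda>M. M$l0$l0"] by (simp add: mm mat_def)
  have ht: "g1 * X$1$l0 + g2 * X$2$l0 + lam * z = z"
  proof -
    have "z * (Y$l0$1 * X$1$l0 + Y$l0$2 * X$2$l0 + Y$l0$3 * X$3$l0) = z" using YX1 by simp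
    then show ?thesis unfolding g1_def g2_def lam_def[symmetric] Y3[symmetric] z_def
      by (simp add: algebra_simps)
  qed
  have hj: "\<forall>j<N. g1 * cos (th N j) + g2 * sin (th N j) + lam \<ge> 0"
  proof (intro allI impI)
    fix j assume j: "j < N"
    have "w j $ l0 = Y$l0$1 * cos (th N j) + Y$l0$2 * sin (th N j) + Y$l0$3"
      unfolding wY[OF j] mv vv_def vector_3 by simp
    then have "0 \<le> z * (Y$l0$1 * cos (th N j) + Y$l0$2 * sin (th N j) + Y$l0$3)"
      unfolding z_def using hw j zn[of l0] by (metis mult_nonneg_nonneg)
    then show "g1 * cos (th N j) + g2 * sin (th N j) + lam \<ge> 0"
      unfolding g1_def g2_def Y3[symmetric] by (simp add: algebra_simps)
  qed
  have hk: "\<forall>k<N. cos (th N k) * X$1$l0 + sin (th N k) * X$2$l0 \<le> rh N * z"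
  proof (intro allI impI)
    fix k assume k: "k < N"
    have "0 \<le> a k $ l0" using ha k by simp
    then show "cos (th N k) * X$1$l0 + sin (th N k) * X$2$l0 \<le> rh N * z"
      unfolding ak[OF k] z_def by simp
  qed
  have nz: "\<not> (X$1$l0 = 0 \<and> X$2$l0 = 0 \<and> z = 0)" using YX1 unfolding z_def by auto
  show False
    by (rule final_contra[OF N6 hk hj ht _ _ _ nz])
       (use l0 zn bnn in \<open>auto simp: lam_def z_def\<close>)
qed



definition Bm :: "nat \<Rightarrow> nat \<Rightarrow> nat \<Rightarrow> real" where
  "Bm N k j = rh N - cos (th N k - th N j)"
definition Mm :: "nat \<Rightarrow> nat \<Rightarrow> nat \<Rightarrow> real" where
  "Mm N i j = (if i div N = j div N then Bm N (i mod N) (j mod N) else 0)"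

lemma rh_ge1: assumes "N \<ge> 6" shows "rh N \<ge> 1"
proof -
  have Np: "real N \<ge> 6" using assms by simp
  then have "2*pi/real N \<le> 2*pi/6" by (intro divide_left_mono) auto
  then have "cos (pi/3) \<le> cos (2*pi/real N)"
    by (intro cos_monotone_0_pi_le) (use Np in auto)
  then show ?thesis unfolding rh_def cos_60 by simp
qed

lemma Bm_nonneg: assumes "N \<ge> 6" shows "Bm N k j \<ge> 0"
  using rh_ge1[OF assms] cos_le_one[of "th N k - th N j"] unfolding Bm_def by linarith

lemma Mm_nonneg: assumes "N \<ge> 6" shows "Mm N i j \<ge> 0"
  using Bm_nonneg[OF assms] unfolding Mm_def by simp

lemma block_lb:
  fixes A W :: "nat \<Rightarrow> nat \<Rightarrow> real"
  assumes n: "n \<ge> 2" and N: "N = 3*n" and fS: "finite S"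
    and hA: "\<forall>k<N. \<forall>l\<in>S. 0 \<le> A k l" and hW: "\<forall>l\<in>S. \<forall>j<N. 0 \<le> W l j"
    and eq: "\<forall>k<N. \<forall>j<N. Bm N k j = (\<Sum>l\<in>S. A k l * W l j)"
  shows "card S \<ge> 4"
proof (rule ccontr)
  assume "\<not> card S \<ge> 4"
  then have "card S \<le> card (UNIV :: 3 set)" by simp
  then obtain h :: "nat \<Rightarrow> 3" where h: "inj_on h S"
    using card_le_inj[OF fS, of "UNIV :: 3 set"] by auto
  define g where "g = the_inv_into S h"
  have gh: "\<And>s. s \<in> S \<Longrightarrow> g (h s) = s" unfolding g_def using h by (simp add: the_inv_into_f_f)
  define a :: "nat \<Rightarrow> real^3" where "a k = (\<chi> l. if l \<in> h`S then A k (g l) else 0)" for k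
  define w :: "nat \<Rightarrow> real^3" where "w j = (\<chi> l. if l \<in> h`S then W (g l) j else 0)" for j
  have "a k \<bullet> w j = fv N k \<bullet> vv N j" if k: "k < N" and j: "j < N" for k j
  proof -
    have "a k \<bullet> w j = (\<Sum>l\<in>UNIV. (if l \<in> h`S then A k (g l) * W (g l) j else 0))"
      unfolding inner_vec_def a_def w_def by (intro sum.cong) auto
    also have "\<dots> = (\<Sum>l\<in>h`S. A k (g l) * W (g l) j)"
      by (simp add: sum.If_cases)
    also have "\<dots> = (\<Sum>s\<in>S. A k s * W s j)"
      using h gh by (simp add: sum.reindex)
    also have "\<dots> = fv N k \<bullet> vv N j" using eq k j fv_vv unfolding Bm_def by simp
    finally show ?thesis .
  qed
  moreover have "\<forall>k<N. \<forall>l. 0 \<le> a k $ l" using hA gh unfolding a_def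
    by (auto simp: the_inv_into_f_f)
  moreover have "\<forall>j<N. \<forall>l. 0 \<le> w j $ l" using hW unfolding w_def
    by (auto simp: gh)
  ultimately show False using core[OF n N] by blast
qed



lemma lower:
  assumes n: "n \<ge> 2" and N: "N = 3*n"
    and nf: "nonneg_fact (Mm N) {..<r*N} (r*N) k"
  shows "4*r \<le> k"
proof -
  have Np: "N > 0" using n N by simp
  have N6: "N \<ge> 6" using n N by simp
  obtain A W where hA: "\<forall>i\<in>{..<r*N}. \<forall>l<k. 0 \<le> A i l" and hW: "\<forall>l<k. \<forall>j<r*N. 0 \<le> W l j"
    and eq: "\<forall>i\<in>{..<r*N}. \<forall>j<r*N. Mm N i j = (\<Sum>l<k. A i l * W l j)"
    using nf unfolding nonneg_fact_def by blast
  define S where "S b = {l. l < k \<and> (\<exists>i j. i < N \<and> j < N \<and> A (b*N+i) l * W l (b*N+j) > 0)}" for b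
  have idx_lt: "b*N + i < r*N" if "b < r" "i < N" for b i
  proof -
    have "b*N + i < b*N + N" using that by simp
    also have "\<dots> = Suc b * N" by simp
    also have "\<dots> \<le> r*N" using that by (intro mult_right_mono) auto
    finally show ?thesis .
  qed
  have divmod: "(b*N + i) div N = b" "(b*N + i) mod N = i" if "i < N" for b i
    using that Np by auto
  have prodnn: "0 \<le> A i l * W l j" if "i < r*N" "l < k" "j < r*N" for i l j
    using hA hW that by simp
  have card4: "card (S b) \<ge> 4" if b: "b < r" for b
  proof -
    have f1: "finite (S b)" unfolding S_def by simp
    have f2: "\<forall>i<N. \<forall>l\<in>S b. 0 \<le> A (b*N+i) l" using hA idx_lt b unfolding S_def by auto
    have f3: "\<forall>l\<in>S b. \<forall>j<N. 0 \<le> W l (b*N+j)" using hW idx_lt b unfolding S_def by auto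
    have f4: "\<forall>i<N. \<forall>j<N. Bm N i j = (\<Sum>l\<in>S b. A (b*N+i) l * W l (b*N+j))"
    proof (intro allI impI)
      fix i j assume i: "i < N" and j: "j < N"
      have "Bm N i j = Mm N (b*N+i) (b*N+j)" unfolding Mm_def using divmod i j by simp
      also have "\<dots> = (\<Sum>l<k. A (b*N+i) l * W l (b*N+j))" using eq idx_lt b i j by simp
      also have "\<dots> = (\<Sum>l\<in>S b. A (b*N+i) l * W l (b*N+j))"
      proof (rule sum.mono_neutral_right)
        show "finite {..<k}" by simp
        show "S b \<subseteq> {..<k}" unfolding S_def by auto
        show "\<forall>l\<in>{..<k} - S b. A (b*N+i) l * W l (b*N+j) = 0"
        proof
          fix l assume l: "l \<in> {..<k} - S b"
          then have "\<not> A (b*N+i) l * W l (b*N+j) > 0" using i j unfolding S_def by auto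
          moreover have "0 \<le> A (b*N+i) l * W l (b*N+j)" using prodnn idx_lt b i j l by simp
          ultimately show "A (b*N+i) l * W l (b*N+j) = 0" by simp
        qed
      qed
      finally show "Bm N i j = (\<Sum>l\<in>S b. A (b*N+i) l * W l (b*N+j))" .
    qed
    show ?thesis using block_lb[OF n N f1 _ f3 f4] f2 by blast
  qed
  have disj: "S b \<inter> S b' = {}" if "b < r" "b' < r" "b \<noteq> b'" for b b'
  proof (rule ccontr)
    assume "S b \<inter> S b' \<noteq> {}"
    then obtain l where lb: "l \<in> S b" and lb': "l \<in> S b'" by blast
    from lb obtain i j where l: "l < k" and ij1: "i < N" "j < N"
      and p1: "A (b*N+i) l * W l (b*N+j) > 0" unfolding S_def by blast
    from lb' obtain i' j' where ij2: "i' < N" "j' < N"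
      and p2: "A (b'*N+i') l * W l (b'*N+j') > 0" unfolding S_def by blast
    note ij = ij1 ij2
    have a1: "A (b*N+i) l > 0" using p1 hA idx_lt that ij l
      by (metis lessThan_iff mult_eq_0_iff order_le_less mult_le_0_iff not_less)
    have w2: "W l (b'*N+j') > 0" using p2 hW idx_lt that ij l
      by (metis mult_eq_0_iff order_le_less mult_le_0_iff not_less)
    have pos: "A (b*N+i) l * W l (b'*N+j') > 0" using a1 w2 by simp
    have "A (b*N+i) l * W l (b'*N+j') \<le> (\<Sum>l'<k. A (b*N+i) l' * W l' (b'*N+j'))"
      by (rule member_le_sum) (use l prodnn idx_lt that ij in auto)
    also have "\<dots> = Mm N (b*N+i) (b'*N+j')" using eq idx_lt that ij by simp
    also have "\<dots> = 0" unfolding Mm_def using divmod ij that by simp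
    finally show False using pos by simp
  qed
  have "4*r = (\<Sum>b<r. 4)" by simp
  also have "\<dots> \<le> (\<Sum>b<r. card (S b))" by (intro sum_mono card4) auto
  also have "\<dots> = card (\<Union>b<r. S b)"
  proof (rule card_UN_disjoint[symmetric])
    show "finite {..<r}" by simp
    show "\<forall>b\<in>{..<r}. finite (S b)" by (simp add: S_def)
    show "\<forall>b\<in>{..<r}. \<forall>b'\<in>{..<r}. b \<noteq> b' \<longrightarrow> S b \<inter> S b' = {}" using disj by blast
  qed
  also have "\<dots> \<le> card {..<k}" by (intro card_mono) (auto simp: S_def)
  finally show ?thesis by simp
qed



definition Aup :: "nat \<Rightarrow> nat \<Rightarrow> nat \<Rightarrow> nat \<Rightarrow> real" where
  "Aup N c k m = rh N - 2*cos (th N k - th N c - 2*pi*real m/3)"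
definition Wup :: "nat \<Rightarrow> nat \<Rightarrow> nat \<Rightarrow> nat \<Rightarrow> real" where
  "Wup N c m j = (1 + cos (th N j - th N c - 2*pi*real m/3))/3"

lemma alg3: "3 * ((p - 2*X0) * ((1+Y0)/3) + (p - 2*X1) * ((1+Y1)/3) + (p - 2*X2) * ((1+Y2)/3))
  = (p - 2*X0)*(1+Y0) + (p - 2*X1)*(1+Y1) + (p - 2*X2)*(1+Y2)" for p X0 X1 X2 Y0 Y1 Y2 :: real
  by (simp add: field_simps)

lemma up_sum:
  "Aup N c k 0 * Wup N c 0 j + Aup N c k 1 * Wup N c 1 j + Aup N c k 2 * Wup N c 2 j = Bm N k j"
proof -
  have e2: "2*pi*real (2::nat)/3 = 4*pi/3" by simp
  have e1: "2*pi*real (1::nat)/3 = 2*pi/3" by simp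
  have e0: "2*pi*real (0::nat)/3 = 0" by simp
  have "3 * (Aup N c k 0 * Wup N c 0 j + Aup N c k 1 * Wup N c 1 j + Aup N c k 2 * Wup N c 2 j)
     = (rh N - 2*cos (th N k - th N c))*(1 + cos (th N j - th N c))
     + (rh N - 2*cos (th N k - th N c - 2*pi/3))*(1 + cos (th N j - th N c - 2*pi/3))
     + (rh N - 2*cos (th N k - th N c - 4*pi/3))*(1 + cos (th N j - th N c - 4*pi/3))"
    unfolding Aup_def Wup_def e0 e1 e2 alg3 by simp
  also have "\<dots> = 3 * (rh N - cos ((th N k - th N c) - (th N j - th N c)))"
    by (rule three_sum_id)
  also have "\<dots> = 3 * Bm N k j" unfolding Bm_def by simp
  finally show ?thesis by simp
qed

lemma Aup_nonneg:
  assumes n: "n \<ge> 2" and N: "N = 3*n" and c: "c < n" and kc: "k mod n \<noteq> c" and m: "m < 3"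
  shows "Aup N c k m \<ge> 0"
proof -
  define d :: int where "d = int k - int c - int m * int n"
  have np: "real n > 0" using n by simp
  have eqd: "th N k - th N c - 2*pi*real m/3 = 2*pi*real_of_int d / real N"
    unfolding th_def d_def N using np by (simp add: field_simps)
  have nd: "\<not> (int N dvd d)"
  proof
    assume "int N dvd d"
    then have "int n dvd d" unfolding N by (simp add: dvd_mult_right)
    then have "int n dvd (int k - int c)" unfolding d_def
      by (metis add_diff_cancel diff_add_cancel dvd_add_left_iff dvd_triv_right)
    then have "int k mod int n = int c mod int n" by (simp add: mod_eq_dvd_iff)
    then have "k mod n = c mod n" by (metis of_nat_eq_iff zmod_int)
    then show False using kc c by simp
  qed
  have "cos (2*pi*real_of_int d / real N) \<le> cos (2*pi/real N)"
    by (rule cos_le_step[OF _ nd]) (use n N in simp)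
  then show ?thesis unfolding Aup_def eqd rh_def by simp
qed

lemma Wup_nonneg: "Wup N c m j \<ge> 0"
proof -
  have "-1 \<le> cos (th N j - th N c - 2*pi*real m/3)" by (rule cos_ge_minus_one)
  then show ?thesis unfolding Wup_def by (intro divide_nonneg_pos) linarith+
qed



lemma missing_residue:
  assumes fin: "finite K" and cK: "card K < n"
  shows "\<exists>c<n. \<forall>k\<in>K. k mod n \<noteq> c"
proof (rule ccontr)
  assume "\<not> ?thesis"
  then have "{..<n} \<subseteq> (\<lambda>k. k mod n) ` K" by auto
  then have "card {..<n} \<le> card ((\<lambda>k. k mod n) ` K)" by (intro card_mono) (use fin in auto)
  also have "\<dots> \<le> card K" by (rule card_image_le[OF fin])
  finally show False using cK by simp
qed

lemma upper:
  assumes n: "n \<ge> 2" and N: "N = 3*n" and I: "I \<subseteq> {..<r*N}" and cI: "card I < n"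
  shows "nonneg_fact (Mm N) I (r*N) (3*r)"
proof -
  have Np: "N > 0" using n N by simp
  define Ib where "Ib b = {k. k < N \<and> b*N+k \<in> I}" for b
  have finI: "finite I" using I finite_subset by blast
  have "\<forall>b. \<exists>c. c < n \<and> (\<forall>k\<in>Ib b. k mod n \<noteq> c)"
  proof
    fix b
    have fb: "finite (Ib b)" unfolding Ib_def by simp
    have "card (Ib b) \<le> card I"
    proof (rule card_inj_on_le[of "\<lambda>k. b*N+k"])
      show "inj_on (\<lambda>k. b*N+k) (Ib b)" by (simp add: inj_on_def)
      show "(\<lambda>k. b*N+k) ` Ib b \<subseteq> I" unfolding Ib_def by auto
      show "finite I" by (rule finI)
    qed
    then have "card (Ib b) < n" using cI by simp
    then show "\<exists>c. c < n \<and> (\<forall>k\<in>Ib b. k mod n \<noteq> c)"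
      using missing_residue[OF fb] by blast
  qed
  then obtain cc where cc: "\<And>b. cc b < n" "\<And>b k. k \<in> Ib b \<Longrightarrow> k mod n \<noteq> cc b"
    by metis
  define A where "A i l = (if l div 3 = i div N then Aup N (cc (i div N)) (i mod N) (l mod 3) else 0)" for i l
  define W where "W l j = (if l div 3 = j div N then Wup N (cc (j div N)) (l mod 3) (j mod N) else 0)" for l j
  have hA: "\<forall>i\<in>I. \<forall>l<3*r. 0 \<le> A i l"
  proof (intro ballI allI impI)
    fix i l assume i: "i \<in> I" and l: "l < 3*r"
    have "i mod N \<in> Ib (i div N)" unfolding Ib_def using i Np
      by (simp add: mult.commute)
    then have "(i mod N) mod n \<noteq> cc (i div N)" by (rule cc(2))
    then show "0 \<le> A i l" unfolding A_def
      using Aup_nonneg[OF n N cc(1)] by simp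
  qed
  have hW: "\<forall>l<3*r. \<forall>j<r*N. 0 \<le> W l j" unfolding W_def using Wup_nonneg by simp
  have heq: "\<forall>i\<in>I. \<forall>j<r*N. Mm N i j = (\<Sum>l<3*r. A i l * W l j)"
  proof (intro ballI allI impI)
    fix i j assume i: "i \<in> I" and j: "j < r*N"
    show "Mm N i j = (\<Sum>l<3*r. A i l * W l j)"
    proof (cases "i div N = j div N")
      case False
      then have z: "\<forall>l\<in>{..<3*r}. A i l * W l j = 0" unfolding A_def W_def by auto
      have "(\<Sum>l<3*r. A i l * W l j) = 0" by (rule sum.neutral[OF z])
      then show ?thesis unfolding Mm_def using False by simp
    next
      case True
      define b where "b = i div N"
      have ir: "i < r*N" using i I by auto
      have br: "b < r" unfolding b_def using ir Np
        by (simp add: div_less_iff_less_mult)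
      have "(\<Sum>l<3*r. A i l * W l j) = (\<Sum>l\<in>{3*b, 3*b+1, 3*b+2}. A i l * W l j)"
      proof (rule sum.mono_neutral_right)
        show "finite {..<3*r}" by simp
        show "{3*b, 3*b+1, 3*b+2} \<subseteq> {..<3*r}" using br by auto
        show "\<forall>l\<in>{..<3*r} - {3*b, 3*b+1, 3*b+2}. A i l * W l j = 0"
        proof
          fix l assume l: "l \<in> {..<3*r} - {3*b, 3*b+1, 3*b+2}"
          have "l div 3 \<noteq> b"
          proof
            assume "l div 3 = b"
            then have e: "l = 3*b + l mod 3" by (metis div_mult_mod_eq mult.commute)
            have "l mod 3 = 0 \<or> l mod 3 = 1 \<or> l mod 3 = 2" by presburger
            then have "l \<in> {3*b, 3*b+1, 3*b+2}" using e by auto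
            then show False using l by blast
          qed
          then show "A i l * W l j = 0" unfolding A_def b_def by simp
        qed
      qed
      also have "\<dots> = A i (3*b) * W (3*b) j + A i (3*b+1) * W (3*b+1) j + A i (3*b+2) * W (3*b+2) j"
        by simp
      also have "\<dots> = Aup N (cc b) (i mod N) 0 * Wup N (cc b) 0 (j mod N)
          + Aup N (cc b) (i mod N) 1 * Wup N (cc b) 1 (j mod N)
          + Aup N (cc b) (i mod N) 2 * Wup N (cc b) 2 (j mod N)"
      proof -
        have d: "(3*b) div 3 = b" "(3*b+1) div 3 = b" "(3*b+2) div 3 = b"
          "(3*b) mod 3 = 0" "(3*b+1) mod 3 = 1" "(3*b+2) mod 3 = 2" by presburger+
        have ib: "i div N = b" by (simp add: b_def)
        have jb: "j div N = b" using True by (simp add: b_def)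
        show ?thesis by (simp only: A_def W_def ib jb d if_True simp_thms)
      qed
      also have "\<dots> = Bm N (i mod N) (j mod N)" by (rule up_sum)
      also have "\<dots> = Mm N i j" unfolding Mm_def using True by simp
      finally show ?thesis by simp
    qed
  qed
  show ?thesis unfolding nonneg_fact_def using hA hW heq by blast
qed

theorem mainTheorem2:
  fixes r n :: nat
  assumes "n \<ge> 2"
  shows "\<exists>M :: nat \<Rightarrow> nat \<Rightarrow> real.
           (\<forall>i<3*r*n. \<forall>j<3*r*n. 0 \<le> M i j) \<and>
           nonneg_rank M {..<3*r*n} (3*r*n) \<ge> 4*r \<and>
           (\<forall>I. I \<subseteq> {..<3*r*n} \<and> card I < n \<longrightarrow> nonneg_rank M I (3*r*n) \<le> 3*r)"
proof (intro exI conjI)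
  define N where "N = 3*n"
  have n2: "n \<ge> 2" by fact
  have NN: "3*r*n = r*N" unfolding N_def by simp
  have N6: "N \<ge> 6" unfolding N_def using n2 by simp
  show "\<forall>i<3*r*n. \<forall>j<3*r*n. 0 \<le> Mm N i j" using Mm_nonneg[OF N6] by simp
  have ex: "nonneg_fact (Mm N) {..<r*N} (r*N) (r*N)"
    unfolding nonneg_fact_def
  proof (intro exI conjI)
    show "\<forall>i\<in>{..<r*N}. \<forall>l<r*N. 0 \<le> Mm N i l" using Mm_nonneg[OF N6] by simp
    show "\<forall>l<r*N. \<forall>j<r*N. 0 \<le> (if l = j then 1 else (0::real))" by simp
    show "\<forall>i\<in>{..<r*N}. \<forall>j<r*N. Mm N i j = (\<Sum>l<r*N. Mm N i l * (if l = j then 1 else 0))"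
      by (simp add: if_distrib cong: if_cong)
  qed
  show "nonneg_rank (Mm N) {..<3*r*n} (3*r*n) \<ge> 4*r"
    unfolding NN nonneg_rank_def
    by (rule lower[OF n2 N_def]) (rule LeastI[of "\<lambda>k. nonneg_fact (Mm N) {..<r*N} (r*N) k" "r*N", OF ex])
  show "\<forall>I. I \<subseteq> {..<3*r*n} \<and> card I < n \<longrightarrow> nonneg_rank (Mm N) I (3*r*n) \<le> 3*r"
    unfolding NN nonneg_rank_def
    using upper[OF n2 N_def] by (auto intro: Least_le)
qed


end
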